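(* Every Steiner triple system on $27$ points of $3$-rank at most $24$ is resolvable.
   Context: A Steiner triple system $STS(v)$ is a pair $(\mathcal{P},\mathcal{B})$ with $|\mathcal{P}|=v$ and $\mathcal{B}$ a set of $3$-subsets (blocks) such that every $2$-subset of $\mathcal{P}$ lies in exactly one block. Its $3$-rank is the rank over $\mathbb{F}_3$ of its block–point incidence matrix. A parallel class is a set of blocks partitioning $\mathcal{P}$; the system is resolvable if $\mathcal{B}$ can be partitioned into parallel classes. *)

theory Defs
  imports Main
begin

definition STS :: "'a set \<Rightarrow> 'a set set \<Rightarrow> bool" where
  "STS P B \<longleftrightarrow> finite P \<and> (\<forall>b\<in>B. b \<subseteq> P \<and> card b = 3) \<and>
     (\<forall>x\<in>P. \<forall>y\<in>P. x \<noteq> y \<longrightarrow> (\<exists>!b. b \<in> B \<and> {x, y} \<subseteq> b))"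

text \<open>A set S of blocks gives F_3-linearly independent rows of the block-point
  incidence matrix: every F_3-linear combination (coefficients taken mod 3)
  of these rows that vanishes has all coefficients zero.\<close>
definition F3_indep_rows :: "'a set \<Rightarrow> 'a set set \<Rightarrow> bool" where
  "F3_indep_rows P S \<longleftrightarrow>
     (\<forall>c :: 'a set \<Rightarrow> int.
        (\<forall>p\<in>P. (\<Sum>b\<in>{b\<in>S. p \<in> b}. c b) mod 3 = 0) \<longrightarrow> (\<forall>b\<in>S. c b mod 3 = 0))"

text \<open>The 3-rank: rank over F_3 of the incidence matrix, i.e. the maximal number
  of F_3-linearly independent rows.\<close>
definition rank3 :: "'a set \<Rightarrow> 'a set set \<Rightarrow> nat" where
  "rank3 P B = Max {card S | S. S \<subseteq> B \<and> F3_indep_rows P S}"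

definition parallel_class :: "'a set \<Rightarrow> 'a set set \<Rightarrow> 'a set set \<Rightarrow> bool" where
  "parallel_class P B C \<longleftrightarrow> C \<subseteq> B \<and> (\<forall>p\<in>P. \<exists>!c. c \<in> C \<and> p \<in> c)"

definition resolvable :: "'a set \<Rightarrow> 'a set set \<Rightarrow> bool" where
  "resolvable P B \<longleftrightarrow> (\<exists>Q. (\<forall>C\<in>Q. parallel_class P B C) \<and> (\<forall>b\<in>B. \<exists>!C. C \<in> Q \<and> b \<in> C))"

end

theory Submission imports Defs "HOL-Library.Numeral_Type" "HOL-Library.FuncSet" begin


section \<open>Arithmetic in the 3-element ring\<close>

lemma ex3: "(x::3) = 0 \<or> x = 1 \<or> x = 2"
proof (cases x rule: bit1_cases)
  case (of_int z)
  then have "z = 0 \<or> z = 1 \<or> z = 2" by auto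
  then show ?thesis using of_int by auto
qed

lemma UNIV3: "(UNIV::3 set) = {0,1,2}" using ex3 by auto

lemma tri_eq: "(x::3) + y + z = 0 \<Longrightarrow> x = y \<Longrightarrow> z = x"
  using ex3[of x] ex3[of z] by (elim disjE) auto

lemma tri_val: "(x::3) + y + z = 0 \<Longrightarrow> z = -(x+y)"
  using ex3[of x] ex3[of y] ex3[of z] by (elim disjE) auto

lemma dist3_sum: "(a::3) \<noteq> b \<Longrightarrow> a \<noteq> c \<Longrightarrow> b \<noteq> c \<Longrightarrow> a + b + c = 0"
  using ex3[of a] ex3[of b] ex3[of c] by (elim disjE) auto

lemma third3: "(a::3) \<noteq> b \<Longrightarrow> -(a+b) \<noteq> a \<and> -(a+b) \<noteq> b"
  using ex3[of a] ex3[of b] by (elim disjE) auto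

lemma cover3: "(a::3) \<noteq> b \<Longrightarrow> e = a \<or> e = b \<or> e = -(a+b)"
  using ex3[of a] ex3[of b] ex3[of e] by (elim disjE) auto

lemma nz_mult3: "(c::3) \<noteq> 0 \<Longrightarrow> c * s = 0 \<Longrightarrow> s = 0"
  using ex3[of c] ex3[of s] by (elim disjE) auto

lemma of_int3: "(of_int k :: 3) = of_int (k mod 3)"
  by (simp add: bit1.of_int_eq)

lemma of_int3_0: "(of_int k :: 3) = 0 \<longleftrightarrow> k mod 3 = 0"
proof -
  have "k mod 3 = 0 \<or> k mod 3 = 1 \<or> k mod 3 = 2" by auto
  then show ?thesis by (subst of_int3) auto
qed

definition H :: "nat \<Rightarrow> 3 \<times> 3 \<Rightarrow> 3" where
  "H j u = (if j = 0 then fst u else if j = 1 then snd u else if j = 2 then fst u + snd u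
            else fst u + fst u + snd u)"

lemma sum4: "(\<Sum>j<(4::nat). F j) = F 0 + F 1 + F 2 + (F 3::'b::comm_monoid_add)"
  by (simp add: numeral_eq_Suc add.assoc)

lemma cnt_aux: "(\<Sum>j<4. if H j (x1,x2) = H j (y1,y2) then 1 else 0 :: nat) = (if (x1,x2) = (y1,y2) then 4 else 1)"
  unfolding sum4 H_def
  using ex3[of x1] ex3[of x2] ex3[of y1] ex3[of y2] by (elim disjE) simp_all

lemma cnt: "(\<Sum>j<4. if H j x = H j y then 1 else 0 :: nat) = (if x = y then 4 else 1)"
  using cnt_aux[of "fst x" "snd x" "fst y" "snd y"] by simp

lemma H_sum: "fst x + fst y + fst z = 0 \<Longrightarrow> snd x + snd y + snd z = 0 \<Longrightarrow> H j x + H j y + H j z = 0"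
proof -
  assume a: "fst x + fst y + fst z = 0" "snd x + snd y + snd z = 0"
  have 1: "(fst x + snd x) + (fst y + snd y) + (fst z + snd z) = (fst x + fst y + fst z) + (snd x + snd y + snd z)"
    by (simp add: algebra_simps)
  have 2: "(fst x + fst x + snd x) + (fst y + fst y + snd y) + (fst z + fst z + snd z)
       = (fst x + fst y + fst z) + (fst x + fst y + fst z) + (snd x + snd y + snd z)"
    by (simp add: algebra_simps)
  show ?thesis unfolding H_def using a 1 2 by auto
qed

section \<open>Basic facts about Steiner triple systems\<close>

locale sts =
  fixes P :: "'a set" and B :: "'a set set"
  assumes sts: "STS P B"
begin

lemma finP: "finite P" using sts unfolding STS_def by auto
lemma blk_sub: "b \<in> B \<Longrightarrow> b \<subseteq> P" using sts unfolding STS_def by auto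
lemma blk_card: "b \<in> B \<Longrightarrow> card b = 3" using sts unfolding STS_def by auto
lemma finB: "finite B"
proof -
  have "B \<subseteq> Pow P" using blk_sub by auto
  then show ?thesis using finP finite_subset by blast
qed
lemma blk_fin: "b \<in> B \<Longrightarrow> finite b" using blk_sub finP finite_subset by blast

lemma ex1_blk: "p \<in> P \<Longrightarrow> q \<in> P \<Longrightarrow> p \<noteq> q \<Longrightarrow> \<exists>!b. b \<in> B \<and> {p, q} \<subseteq> b"
  using sts unfolding STS_def by auto

definition blk :: "'a \<Rightarrow> 'a \<Rightarrow> 'a set" where
  "blk p q = (THE b. b \<in> B \<and> {p, q} \<subseteq> b)"

lemma blk: assumes "p \<in> P" "q \<in> P" "p \<noteq> q"
  shows "blk p q \<in> B" "p \<in> blk p q" "q \<in> blk p q"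
  using theI'[OF ex1_blk[OF assms]] unfolding blk_def by auto

lemma blk_uniq: assumes "b \<in> B" "p \<in> b" "q \<in> b" "p \<noteq> q"
  shows "b = blk p q"
proof -
  have "p \<in> P" "q \<in> P" using assms blk_sub by auto
  then show ?thesis using ex1_blk[of p q] blk[of p q] assms by blast
qed

lemma blk3: assumes "b \<in> B" "x \<in> b" "y \<in> b" "z \<in> b" "x \<noteq> y" "x \<noteq> z" "y \<noteq> z"
  shows "b = {x, y, z}"
proof -
  have "{x, y, z} \<subseteq> b" using assms by auto
  moreover have "card {x, y, z} = 3" using assms by auto
  ultimately show ?thesis using card_subset_eq[OF blk_fin[OF assms(1)]] blk_card[OF assms(1)] by metis
qed

lemma blk_third: assumes "b \<in> B" "p \<in> b" "q \<in> b" "p \<noteq> q"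
  shows "\<exists>r. r \<in> b \<and> r \<noteq> p \<and> r \<noteq> q \<and> b = {p, q, r}"
proof -
  obtain x y z where xyz: "x \<noteq> y" "x \<noteq> z" "y \<noteq> z" "b = {x, y, z}"
    using blk_card[OF assms(1)] card_3_iff by metis
  then show ?thesis using assms by auto
qed

definition thd :: "'a \<Rightarrow> 'a \<Rightarrow> 'a" where
  "thd p q = (THE r. r \<in> blk p q \<and> r \<noteq> p \<and> r \<noteq> q)"

lemma thd: assumes "p \<in> P" "q \<in> P" "p \<noteq> q"
  shows "thd p q \<in> blk p q" "thd p q \<noteq> p" "thd p q \<noteq> q" "thd p q \<in> P"
    "blk p q = {p, q, thd p q}"
proof -
  obtain r where r: "r \<in> blk p q" "r \<noteq> p" "r \<noteq> q" "blk p q = {p, q, r}"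
    using blk_third[OF blk(1,2,3)[OF assms]] assms(3) by blast
  have "\<exists>!r. r \<in> blk p q \<and> r \<noteq> p \<and> r \<noteq> q"
    using r by auto
  then have t: "thd p q \<in> blk p q \<and> thd p q \<noteq> p \<and> thd p q \<noteq> q"
    unfolding thd_def by (rule theI')
  then have "thd p q = r" using r by auto
  then show "thd p q \<in> blk p q" "thd p q \<noteq> p" "thd p q \<noteq> q" "blk p q = {p, q, thd p q}"
    using r by auto
  then show "thd p q \<in> P" using blk_sub[OF blk(1)[OF assms]] by auto
qed

definition zs :: "('a \<Rightarrow> 3) \<Rightarrow> bool" where
  "zs h \<longleftrightarrow> (\<forall>b\<in>B. sum h b = 0)"

lemma zs_thd: assumes "zs h" "p \<in> P" "q \<in> P" "p \<noteq> q"
  shows "h p + h q + h (thd p q) = 0"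
proof -
  have "sum h (blk p q) = 0" using assms(1) blk(1)[OF assms(2-4)] unfolding zs_def by auto
  then show ?thesis using thd[OF assms(2-4)] assms(4) by (simp add: add.assoc)
qed

lemma zs_blk: assumes "zs h" "b \<in> B" "x \<in> b" "y \<in> b" "z \<in> b" "x \<noteq> y" "x \<noteq> z" "y \<noteq> z"
  shows "h x + h y + h z = 0"
proof -
  have "sum h b = 0" using assms unfolding zs_def by auto
  then show ?thesis using blk3[OF assms(2-8)] assms(6-8) by (simp add: add.assoc)
qed

end


locale sts27 = sts +
  assumes c27: "card P = 27"
begin

lemma prod_le:
  assumes z: "zs h" and ab: "a \<noteq> b" and c: "c = -(a+b)"
  shows "card {p\<in>P. h p = a} * card {p\<in>P. h p = b} \<le> card {p\<in>P. h p = a} * card {p\<in>P. h p = c}"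
proof -
  let ?A = "{p\<in>P. h p = a}" and ?Bs = "{p\<in>P. h p = b}" and ?C = "{p\<in>P. h p = c}"
  define F where "F = (\<lambda>(p, q). (p, thd p q))"
  have cb: "c \<noteq> b" "c \<noteq> a" using third3[OF ab] c by auto
  have pq: "p \<noteq> q" if "p \<in> ?A" "q \<in> ?Bs" for p q using that ab by auto
  have hthd: "h (thd p q) = c" if "p \<in> ?A" "q \<in> ?Bs" for p q
    using tri_val[OF zs_thd[OF z, of p q]] that pq[OF that] c by auto
  have "F ` (?A \<times> ?Bs) \<subseteq> ?A \<times> ?C"
    using thd(4) hthd pq unfolding F_def by auto
  moreover have "inj_on F (?A \<times> ?Bs)"
  proof (rule inj_onI)
    fix x y assume xy: "x \<in> ?A \<times> ?Bs" "y \<in> ?A \<times> ?Bs" "F x = F y"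
    obtain p q p' q' where xy2: "x = (p, q)" "y = (p', q')" by (cases x, cases y) auto
    have a1: "p \<in> P" "h p = a" "q \<in> P" "h q = b" "p' \<in> P" "h p' = a" "q' \<in> P" "h q' = b"
      and eq: "F (p, q) = F (p', q')" using xy xy2 by auto
    then have pp: "p' = p" and tt: "thd p q = thd p q'" unfolding F_def by auto
    let ?r = "thd p q"
    have pq1: "p \<noteq> q" "p \<noteq> q'" using a1 ab by auto
    have r1: "?r \<in> blk p q" "?r \<noteq> p" using thd[of p q] a1 pq1 by auto
    have r2: "?r \<in> blk p q'" using thd[of p q'] a1 pq1 tt by auto
    have "blk p q = blk p ?r" using blk_uniq[OF blk(1) blk(2) r1(1) r1(2)[symmetric]] a1 pq1 by auto
    moreover have "blk p q' = blk p ?r" using blk_uniq[OF blk(1) blk(2) r2 r1(2)[symmetric]] a1 pq1 by auto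
    ultimately have "q' \<in> {p, q, ?r}" using blk(3)[of p q'] thd(5)[of p q] a1 pq1 by auto
    moreover have "h ?r = c" using hthd a1 by auto
    ultimately show "x = y" using pp a1 cb ab xy2 by auto
  qed
  ultimately have "card (?A \<times> ?Bs) \<le> card (?A \<times> ?C)"
    using card_inj_on_le finP by (metis (no_types, lifting) finite_SigmaI finite_subset mem_Collect_eq subsetI)
  then show ?thesis by (simp add: card_cartesian_product)
qed

lemma prod_eq:
  assumes z: "zs h" and ab: "a \<noteq> b"
  shows "card {p\<in>P. h p = a} * card {p\<in>P. h p = b} = card {p\<in>P. h p = a} * card {p\<in>P. h p = -(a+b)}"
proof -
  have "a \<noteq> -(a+b)" using third3[OF ab] by auto
  moreover have "-(a + -(a+b)) = b" by simp
  ultimately have "card {p\<in>P. h p = a} * card {p\<in>P. h p = -(a+b)} \<le> card {p\<in>P. h p = a} * card {p\<in>P. h p = b}"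
    using prod_le[OF z, of a "-(a+b)" b] by auto
  then show ?thesis using prod_le[OF z ab refl] by linarith
qed

lemma card_split3: "card P = card {p\<in>P. h p = 0} + card {p\<in>P. h p = 1} + card {p\<in>P. h p = (2::3)}"
proof -
  have "P = {p\<in>P. h p = 0} \<union> {p\<in>P. h p = 1} \<union> {p\<in>P. h p = 2}" using ex3 by blast
  moreover have "card ({p\<in>P. h p = 0} \<union> {p\<in>P. h p = 1} \<union> {p\<in>P. h p = 2})
     = card {p\<in>P. h p = 0} + card {p\<in>P. h p = 1} + card {p\<in>P. h p = (2::3)}"
    using finP by (subst card_Un_disjoint; auto)+
  ultimately show ?thesis by simp
qed

lemma level9:
  assumes z: "zs h" and nc: "\<not> (\<exists>a. \<forall>p\<in>P. h p = a)"
  shows "card {p\<in>P. h p = e} = 9"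
proof -
  obtain p q where pq: "p \<in> P" "q \<in> P" "h p \<noteq> h q" using nc by blast
  define a where "a = h p"
  define b where "b = h q"
  have ab: "a \<noteq> b" using pq a_def b_def by auto
  let ?n = "\<lambda>e. card {p\<in>P. h p = e}"
  have na: "?n a > 0" using pq finP a_def by (auto simp: card_gt_0_iff)
  have nb: "?n b > 0" using pq finP b_def by (auto simp: card_gt_0_iff)
  have e1: "?n b = ?n (-(a+b))" using prod_eq[OF z ab] na by simp
  have e2: "?n a = ?n (-(b+a))" using prod_eq[OF z ab[symmetric]] nb by simp
  have all: "?n x = ?n a" for x
    using cover3[OF ab, of x] e1 e2 by (auto simp: add.commute)
  have "card P = ?n 0 + ?n 1 + ?n 2" by (rule card_split3)
  then have "27 = 3 * ?n a" using all[of 0] all[of 1] all[of 2] c27 by simp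
  then show ?thesis using all[of e] by simp
qed

end


lemma lin2: "(x::3) + y = a \<Longrightarrow> y = a + 2 * x"
  using ex3[of x] ex3[of y] ex3[of a] by (elim disjE) auto
lemma lin3: "(x::3) + x + y = a \<Longrightarrow> y = a + 1 * x"
  using ex3[of x] ex3[of y] ex3[of a] by (elim disjE) auto

lemma card_ind: "finite A \<Longrightarrow> card {x\<in>A. Q x} = (\<Sum>x\<in>A. if Q x then 1 else 0::nat)"
  by (simp add: sum.inter_filter[symmetric])

locale res27 = sts27 +
  fixes f g :: "'a \<Rightarrow> 3"
  assumes zf: "zs f" and zg: "zs g"
    and nf: "\<not> (\<exists>a. \<forall>p\<in>P. f p = a)"
    and ng: "\<And>a k. \<not> (\<forall>p\<in>P. g p = a + k * f p)"
begin

definition phi :: "'a \<Rightarrow> 3 \<times> 3" where "phi p = (f p, g p)"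
definition h :: "nat \<Rightarrow> 'a \<Rightarrow> 3" where "h j p = H j (phi p)"
definition Fib :: "3 \<times> 3 \<Rightarrow> 'a set" where "Fib u = {p\<in>P. phi p = u}"
definition Ln :: "nat \<Rightarrow> 3 \<Rightarrow> 'a set" where "Ln j c = {p\<in>P. h j p = c}"

lemma sum_H: "sum (h j) b = H j (sum f b, sum g b)"
  unfolding h_def H_def phi_def by (auto simp: sum.distrib sum_distrib_left)

lemma zs_h: "zs (h j)"
  using zf zg unfolding zs_def by (auto simp: sum_H H_def)

lemma nc_h: assumes "j < 4" shows "\<not> (\<exists>a. \<forall>p\<in>P. h j p = a)"
proof
  assume "\<exists>a. \<forall>p\<in>P. h j p = a"
  then obtain a where a: "\<forall>p\<in>P. h j p = a" by blast
  have "j = 0 \<or> j = 1 \<or> j = 2 \<or> j = 3" using assms by auto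
  then show False
  proof (elim disjE)
    assume "j = 0" then show False using a nf unfolding h_def H_def phi_def by auto
  next
    assume "j = 1" then show False using a ng[of a 0] unfolding h_def H_def phi_def by auto
  next
    assume "j = 2" then show False using a ng[of a 2] lin2 unfolding h_def H_def phi_def by auto
  next
    assume "j = 3" then show False using a ng[of a 1] lin3 unfolding h_def H_def phi_def by auto
  qed
qed

lemma Ln9: "j < 4 \<Longrightarrow> card (Ln j c) = 9"
  unfolding Ln_def by (rule level9[OF zs_h nc_h])

lemma Fib3: "card (Fib u) = 3"
proof -
  have "(\<Sum>j<4. card (Ln j (H j u))) = 36" using Ln9 by (simp add: sum4)
  moreover have "(\<Sum>j<4. card (Ln j (H j u))) = (\<Sum>j<4. \<Sum>p\<in>P. if H j (phi p) = H j u then 1 else 0)"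
    unfolding Ln_def h_def using finP by (simp add: card_ind)
  moreover have "\<dots> = (\<Sum>p\<in>P. \<Sum>j<4. if H j (phi p) = H j u then 1 else 0)"
    by (rule sum.swap)
  moreover have "\<dots> = (\<Sum>p\<in>P. 1 + (if phi p = u then 3 else 0))"
    by (rule sum.cong) (simp_all add: cnt)
  moreover have "\<dots> = card P + 3 * card (Fib u)"
  proof -
    have "(\<Sum>p\<in>P. 1 + (if phi p = u then 3 else 0)) = card P + (\<Sum>p\<in>P. if phi p = u then 3 else 0::nat)"
      by (simp only: sum.distrib) simp
    moreover have "(\<Sum>p\<in>P. if phi p = u then 3 else 0::nat) = 3 * (\<Sum>p\<in>P. if phi p = u then 1 else 0)"
      by (subst sum_distrib_left) (rule sum.cong, auto)
    ultimately show ?thesis unfolding Fib_def using finP by (simp add: card_ind)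
  qed
  ultimately show ?thesis using c27 by simp
qed

end


section \<open>Latin squares of order 3 split into transversals\<close>

locale latin =
  fixes S :: "'a set" and k :: "'a \<Rightarrow> 'b" and T :: "'a set set"
  assumes finS: "finite S" and V3: "card (k ` S) = 3"
    and grp: "\<And>v. v \<in> k ` S \<Longrightarrow> card {p\<in>S. k p = v} = 3"
    and Tsub: "\<And>b. b \<in> T \<Longrightarrow> b \<subseteq> S"
    and Tcard: "\<And>b. b \<in> T \<Longrightarrow> card b = 3"
    and Tinj: "\<And>b. b \<in> T \<Longrightarrow> inj_on k b"
    and cover: "\<And>p q. p \<in> S \<Longrightarrow> q \<in> S \<Longrightarrow> k p \<noteq> k q \<Longrightarrow> \<exists>!b. b \<in> T \<and> p \<in> b \<and> q \<in> b"
begin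

lemma kim: assumes "b \<in> T" shows "k ` b = k ` S"
proof -
  have fb: "finite b" using Tsub[OF assms] finS finite_subset by blast
  have "card (k ` b) = 3" using card_image[OF Tinj[OF assms]] Tcard[OF assms] by simp
  moreover have "k ` b \<subseteq> k ` S" using Tsub[OF assms] by auto
  ultimately show ?thesis using card_subset_eq[of "k ` S" "k ` b"] finS V3 by auto
qed

lemma kpt: assumes "b \<in> T" "p \<in> S" shows "\<exists>x\<in>b. k x = k p"
  using kim[OF assms(1)] assms(2) by (metis imageE imageI)

lemma kuniq: assumes "b \<in> T" "x \<in> b" "y \<in> b" "k x = k y" shows "x = y"
  using Tinj[OF assms(1)] assms(2-4) inj_on_def by metis

lemma blk_eq: assumes "b \<in> T" "b' \<in> T" "p \<in> b" "q \<in> b" "p \<in> b'" "q \<in> b'" "k p \<noteq> k q"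
  shows "b = b'"
proof -
  have "p \<in> S" "q \<in> S" using assms Tsub by auto
  then show ?thesis using cover[of p q] assms by blast
qed

lemma par: assumes bT: "b \<in> T" and pS: "p \<in> S"
  shows "\<exists>!b'. b' \<in> T \<and> p \<in> b' \<and> (b' = b \<or> b' \<inter> b = {})"
proof (cases "p \<in> b")
  case True
  show ?thesis
  proof (rule ex1I[of _ b])
    show "b \<in> T \<and> p \<in> b \<and> (b = b \<or> b \<inter> b = {})" using bT True by auto
  next
    fix b' assume "b' \<in> T \<and> p \<in> b' \<and> (b' = b \<or> b' \<inter> b = {})"
    then show "b' = b" using True by auto
  qed
next
  case False
  obtain a where a: "a \<in> b" "k a = k p" using kpt[OF bT pS] by blast
  have fb: "finite b" using Tsub[OF bT] finS finite_subset by blast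
  have "card (b - {a}) = 2" using Tcard[OF bT] a fb by simp
  then obtain x y where xy: "b - {a} = {x, y}" "x \<noteq> y" using card_2_iff by metis
  have bxy: "b = {a, x, y}" "x \<noteq> a" "y \<noteq> a" using xy a by auto
  have kd: "k x \<noteq> k a" "k y \<noteq> k a" "k x \<noteq> k y"
    using kuniq[OF bT, of x a] kuniq[OF bT, of y a] kuniq[OF bT, of x y] bxy xy(2) by auto
  have xS: "x \<in> S" "y \<in> S" "a \<in> S" using Tsub[OF bT] bxy by auto
  have pa: "p \<noteq> a" using False a by auto
  have disj: "g \<inter> b = {}" if g: "g \<in> T" "p \<in> g" "z \<in> g" "k z = k x" "z \<noteq> x" "y \<notin> g" for g z
  proof -
    have "a \<notin> g" using kuniq[OF g(1) g(2), of a] a pa by auto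
    moreover have "x \<notin> g" using kuniq[OF g(1) g(3), of x] g(4,5) by auto
    ultimately show ?thesis using g(6) bxy by auto
  qed
  show ?thesis
  proof (rule ex_ex1I)
    let ?G = "{q\<in>S. k q = k x}"
    have "card ?G = 3" using grp xS by auto
    moreover have "finite ?G" using finS by auto
    ultimately have "card (?G - {x}) = 2" using xS by simp
    then obtain z1 z2 where z: "?G - {x} = {z1, z2}" "z1 \<noteq> z2" using card_2_iff by metis
    have zS: "z1 \<in> S" "z2 \<in> S" "k z1 = k x" "k z2 = k x" "z1 \<noteq> x" "z2 \<noteq> x" using z by auto
    obtain g1 where g1: "g1 \<in> T" "p \<in> g1" "z1 \<in> g1" using cover[OF pS zS(1)] a kd zS by metis
    obtain g2 where g2: "g2 \<in> T" "p \<in> g2" "z2 \<in> g2" using cover[OF pS zS(2)] a kd zS by metis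
    have "y \<notin> g1 \<or> y \<notin> g2"
    proof (rule ccontr)
      assume "\<not> (y \<notin> g1 \<or> y \<notin> g2)"
      then have "g1 = g2" using blk_eq[of g1 g2 p y] g1 g2 a kd by auto
      then show False using kuniq[OF g2(1) _ g2(3), of z1] g1(3) zS z(2) by auto
    qed
    then show "\<exists>b'. b' \<in> T \<and> p \<in> b' \<and> (b' = b \<or> b' \<inter> b = {})"
      using disj[OF g1(1,2,3) zS(3) zS(5)] disj[OF g2(1,2,3) zS(4) zS(6)] g1 g2 by blast
  next
    fix b1 b2
    assume h1: "b1 \<in> T \<and> p \<in> b1 \<and> (b1 = b \<or> b1 \<inter> b = {})"
      and h2: "b2 \<in> T \<and> p \<in> b2 \<and> (b2 = b \<or> b2 \<inter> b = {})"
    have d1: "b1 \<inter> b = {}" and d2: "b2 \<inter> b = {}" using h1 h2 False by auto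
    show "b1 = b2"
    proof (rule ccontr)
      assume ne: "b1 \<noteq> b2"
      obtain x1 where x1: "x1 \<in> b1" "k x1 = k x" using kpt[of b1 x] h1 xS by auto
      obtain x2 where x2: "x2 \<in> b2" "k x2 = k x" using kpt[of b2 x] h2 xS by auto
      have x1x: "x1 \<noteq> x" "x2 \<noteq> x" using d1 d2 x1 x2 bxy by auto
      have x12: "x1 \<noteq> x2"
      proof
        assume "x1 = x2"
        then have "b1 = b2" using blk_eq[of b1 b2 p x1] h1 h2 x1 x2 a kd by auto
        then show False using ne by simp
      qed
      have x1S: "x1 \<in> S" "x2 \<in> S" using Tsub h1 h2 x1 x2 by auto
      let ?G = "{q\<in>S. k q = k x}"
      have "card ?G = 3" using grp xS by auto
      moreover have "{x, x1, x2} \<subseteq> ?G" using x1S x1 x2 xS by auto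
      moreover have "card {x, x1, x2} = 3" using x1x x12 by auto
      moreover have "finite ?G" using finS by auto
      ultimately have G: "?G = {x, x1, x2}" using card_subset_eq by metis
      have "k p \<noteq> k y" using a kd by auto
      then obtain g where g: "g \<in> T" "p \<in> g" "y \<in> g" using cover[OF pS xS(2)] by metis
      obtain z where zg: "z \<in> g" "k z = k x" using kpt[OF g(1) xS(1)] by auto
      have "z \<in> ?G" using zg Tsub[OF g(1)] by auto
      then have "z = x \<or> z = x1 \<or> z = x2" using G by auto
      then show False
      proof (elim disjE)
        assume "z = x"
        moreover have "x \<in> b" "y \<in> b" using bxy by auto
        ultimately have "g = b" using blk_eq[OF g(1) bT, of x y] g zg kd by auto
        then show False using g False by auto
      next
        assume "z = x1"
        then have "g = b1" using blk_eq[of g b1 p x1] g zg h1 x1 a kd by auto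
        then show False using g d1 bxy by auto
      next
        assume "z = x2"
        then have "g = b2" using blk_eq[of g b2 p x2] g zg h2 x2 a kd by auto
        then show False using g d2 bxy by auto
      qed
    qed
  qed
qed

lemma card_thru: assumes aS: "a \<in> S" shows "card {g\<in>T. a \<in> g} = 3"
proof -
  have "\<exists>v\<in>k ` S. v \<noteq> k a"
  proof (rule ccontr)
    assume "\<not> ?thesis"
    then have "k ` S \<subseteq> {k a}" by auto
    then have "card (k ` S) \<le> card {k a}" by (rule card_mono[rotated]) simp
    then show False using V3 by simp
  qed
  then obtain v where v: "v \<in> k ` S" "v \<noteq> k a" by blast
  let ?G = "{q\<in>S. k q = v}"
  define F where "F q = (THE g. g \<in> T \<and> a \<in> g \<and> q \<in> g)" for q
  have F: "F q \<in> T \<and> a \<in> F q \<and> q \<in> F q" if qG: "q \<in> ?G" for q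
  proof -
    have qS: "q \<in> S" and kq: "k a \<noteq> k q" using qG v by auto
    have ex: "\<exists>!g. g \<in> T \<and> a \<in> g \<and> q \<in> g" using cover[OF aS qS kq] .
    show ?thesis unfolding F_def by (rule theI'[OF ex])
  qed
  have "inj_on F ?G"
  proof (rule inj_onI)
    fix q q' assume "q \<in> ?G" "q' \<in> ?G" "F q = F q'"
    then show "q = q'" using kuniq[of "F q" q q'] F[of q] F[of q'] by auto
  qed
  moreover have "F ` ?G = {g\<in>T. a \<in> g}"
  proof
    show "F ` ?G \<subseteq> {g\<in>T. a \<in> g}" using F by auto
  next
    show "{g\<in>T. a \<in> g} \<subseteq> F ` ?G"
    proof
      fix g assume g: "g \<in> {g\<in>T. a \<in> g}"
      have "v \<in> k ` g" using kim[of g] g v by auto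
      then obtain q where q: "q \<in> g" "k q = v" by auto
      have qG: "q \<in> ?G" using q Tsub g by auto
      have "F q = g"
        using blk_eq[of "F q" g a q] F[OF qG] g q v by force
      then show "g \<in> F ` ?G" using qG by auto
    qed
  qed
  ultimately have "card {g\<in>T. a \<in> g} = card ?G" using card_image by metis
  then show ?thesis using grp v by simp
qed

definition cl :: "'a set \<Rightarrow> 'a set set" where
  "cl b = {b'\<in>T. b' = b \<or> b' \<inter> b = {}}"

definition a0 :: 'a where "a0 = (SOME p. p \<in> S)"

definition Tr :: "'a set set set" where "Tr = cl ` {g\<in>T. a0 \<in> g}"

lemma a0S: "a0 \<in> S"
proof -
  have "S \<noteq> {}" using V3 by auto
  then show ?thesis unfolding a0_def by (simp add: some_in_eq)
qed

lemma card_Tr: "card Tr = 3"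
proof -
  have "inj_on cl {g\<in>T. a0 \<in> g}"
  proof (rule inj_onI)
    fix g1 g2 assume g: "g1 \<in> {g\<in>T. a0 \<in> g}" "g2 \<in> {g\<in>T. a0 \<in> g}" "cl g1 = cl g2"
    have "g2 \<in> cl g1" using g unfolding cl_def by auto
    then show "g1 = g2" using g unfolding cl_def by auto
  qed
  then show ?thesis unfolding Tr_def using card_image card_thru[OF a0S] by metis
qed

lemma Tr_part: assumes "b \<in> T" shows "\<exists>!t. t \<in> Tr \<and> b \<in> t"
proof -
  obtain g where g: "g \<in> T" "a0 \<in> g" "g = b \<or> g \<inter> b = {}"
    and gu: "\<And>g'. g' \<in> T \<and> a0 \<in> g' \<and> (g' = b \<or> g' \<inter> b = {}) \<Longrightarrow> g' = g"
    using par[OF assms a0S] by metis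
  show ?thesis
  proof (rule ex1I[of _ "cl g"])
    show "cl g \<in> Tr \<and> b \<in> cl g" using g assms unfolding Tr_def cl_def by auto
  next
    fix t assume t: "t \<in> Tr \<and> b \<in> t"
    then obtain g' where g': "g' \<in> T" "a0 \<in> g'" "t = cl g'" unfolding Tr_def by auto
    then have "b = g' \<or> b \<inter> g' = {}" using t unfolding cl_def by auto
    then have "g' = g" using gu g' by auto
    then show "t = cl g" using g' by simp
  qed
qed

lemma Tr_sub: "t \<in> Tr \<Longrightarrow> t \<subseteq> T" unfolding Tr_def cl_def by auto

lemma Tr_par: assumes "t \<in> Tr" "p \<in> S" shows "\<exists>!b. b \<in> t \<and> p \<in> b"
proof -
  obtain g where g: "g \<in> T" "t = cl g" using assms unfolding Tr_def by auto
  show ?thesis using par[OF g(1) assms(2)] unfolding g(2) cl_def by auto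
qed

end




lemma neg2: "-((x::3) + x) = x"
  using ex3[of x] by (elim disjE) auto

context res27
begin

lemma h_thd: assumes "p \<in> P" "q \<in> P" "p \<noteq> q"
  shows "h j (thd p q) = -(h j p + h j q)"
  using tri_val[OF zs_thd[OF zs_h assms]] .

lemma f_thd: assumes "p \<in> P" "q \<in> P" "p \<noteq> q"
  shows "f (thd p q) = -(f p + f q)" "g (thd p q) = -(g p + g q)"
  using tri_val[OF zs_thd[OF zf assms]] tri_val[OF zs_thd[OF zg assms]] by auto

lemma Fib_fin: "finite (Fib u)" using finP unfolding Fib_def by auto

lemma fib_blk: assumes "p \<in> Fib u" "q \<in> Fib u" "p \<noteq> q"
  shows "blk p q = Fib u"
proof -
  have pq: "p \<in> P" "q \<in> P" "phi p = u" "phi q = u" using assms unfolding Fib_def by auto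
  have "phi (thd p q) = u"
    using f_thd[OF pq(1,2) assms(3)] pq(3,4) neg2 unfolding phi_def by (auto simp: prod_eq_iff)
  then have "blk p q \<subseteq> Fib u" using thd[OF pq(1,2) assms(3)] assms(1,2) unfolding Fib_def by auto
  moreover have "card (blk p q) = card (Fib u)" using Fib3 blk_card blk(1)[OF pq(1,2) assms(3)] by simp
  ultimately show ?thesis using card_subset_eq[OF Fib_fin] by blast
qed

lemma Fib_B: "Fib u \<in> B"
proof -
  obtain x y z where "x \<noteq> y" "x \<noteq> z" "y \<noteq> z" "Fib u = {x, y, z}"
    using Fib3[of u] card_3_iff by metis
  then have "x \<in> Fib u" "y \<in> Fib u" "x \<noteq> y" "x \<in> P" "y \<in> P" unfolding Fib_def by auto
  then show ?thesis using fib_blk blk(1) by metis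
qed

definition isFib :: "'a set \<Rightarrow> bool" where "isFib b \<longleftrightarrow> (\<exists>u. b = Fib u)"

lemma nonfib_inj: assumes "b \<in> B" "\<not> isFib b" shows "inj_on phi b"
proof (rule inj_onI, rule ccontr)
  fix x y assume xy: "x \<in> b" "y \<in> b" "phi x = phi y" "x \<noteq> y"
  have "x \<in> P" "y \<in> P" using xy blk_sub[OF assms(1)] by auto
  then have "x \<in> Fib (phi x)" "y \<in> Fib (phi x)" using xy unfolding Fib_def by auto
  then have "blk x y = Fib (phi x)" using fib_blk xy by auto
  moreover have "b = blk x y" using blk_uniq[OF assms(1) xy(1,2,4)] .
  ultimately have "b = Fib (phi x)" by simp
  then show False using assms(2) unfolding isFib_def by blast
qed

lemma nonfib_pair: assumes "x \<in> b" "y \<in> b" "phi x \<noteq> phi y" shows "\<not> isFib b"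
  using assms unfolding isFib_def Fib_def by auto

lemma h_const: assumes b: "b \<in> B" and xy: "x \<in> b" "y \<in> b" "x \<noteq> y" "h j x = h j y" and z: "z \<in> b"
  shows "h j z = h j x"
proof (cases "z = x \<or> z = y")
  case True then show ?thesis using xy by auto
next
  case False
  then show ?thesis using tri_eq[OF zs_blk[OF zs_h b xy(1,2) z xy(3)]] xy(4) by auto
qed

lemma jof_ex1: assumes b: "b \<in> B" "\<not> isFib b"
  shows "\<exists>!j. j < 4 \<and> (\<exists>c. b \<subseteq> Ln j c)"
proof -
  obtain x y z where xyz: "x \<noteq> y" "x \<noteq> z" "y \<noteq> z" "b = {x, y, z}"
    using blk_card[OF b(1)] card_3_iff by metis
  have xy: "x \<in> b" "y \<in> b" "x \<noteq> y" using xyz by auto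
  have ne: "phi x \<noteq> phi y" using inj_onD[OF nonfib_inj[OF b] _ xy(1,2)] xy(3) by blast
  have "card {j \<in> {..<4}. H j (phi x) = H j (phi y)} = 1"
  proof -
    have "card {j \<in> {..<4}. H j (phi x) = H j (phi y)} = (\<Sum>j<4. if H j (phi x) = H j (phi y) then 1 else 0)"
      by (rule card_ind) simp
    then show ?thesis using cnt[of "phi x" "phi y"] ne by simp
  qed
  then obtain j0 where j0: "{j \<in> {..<4}. H j (phi x) = H j (phi y)} = {j0}"
    by (rule card_1_singletonE)
  have j0': "j0 < 4" "h j0 x = h j0 y" using j0 unfolding h_def by auto
  show ?thesis
  proof (rule ex1I[of _ j0])
    have "b \<subseteq> Ln j0 (h j0 x)"
      using h_const[OF b(1) xy j0'(2)] blk_sub[OF b(1)] unfolding Ln_def by auto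
    then show "j0 < 4 \<and> (\<exists>c. b \<subseteq> Ln j0 c)" using j0' by auto
  next
    fix j assume "j < 4 \<and> (\<exists>c. b \<subseteq> Ln j c)"
    then obtain c where "j < 4" "b \<subseteq> Ln j c" by auto
    then have "j \<in> {j \<in> {..<4}. H j (phi x) = H j (phi y)}"
      using xy unfolding Ln_def h_def by auto
    then show "j = j0" using j0 by auto
  qed
qed

definition Tb :: "nat \<Rightarrow> 3 \<Rightarrow> 'a set set" where
  "Tb j c = {b\<in>B. b \<subseteq> Ln j c \<and> \<not> isFib b}"

lemma Ln_Fib: assumes "v \<in> phi ` Ln j c" shows "{p \<in> Ln j c. phi p = v} = Fib v"
proof -
  obtain p0 where p0: "p0 \<in> Ln j c" "v = phi p0" using assms by auto
  show ?thesis using p0 unfolding Ln_def Fib_def h_def by auto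
qed

lemma latin_inst: assumes j: "j < 4" shows "latin (Ln j c) phi (Tb j c)"
proof
  show fin: "finite (Ln j c)" using finP unfolding Ln_def by auto
  show grp: "card {p \<in> Ln j c. phi p = v} = 3" if "v \<in> phi ` Ln j c" for v
    using Ln_Fib[OF that] Fib3 by simp
  have "card (Ln j c) = (\<Sum>v\<in>phi ` Ln j c. card {p \<in> Ln j c. phi p = v})"
    unfolding card_eq_sum by (rule sum.group[OF fin finite_imageI[OF fin] subset_refl, symmetric])
  also have "\<dots> = 3 * card (phi ` Ln j c)" using grp by simp
  finally show "card (phi ` Ln j c) = 3" using Ln9[OF j] by simp
  show "b \<subseteq> Ln j c" if "b \<in> Tb j c" for b using that unfolding Tb_def by auto
  show "card b = 3" if "b \<in> Tb j c" for b using that blk_card unfolding Tb_def by auto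
  show "inj_on phi b" if "b \<in> Tb j c" for b using nonfib_inj[of b] that unfolding Tb_def by blast
  show "\<exists>!b. b \<in> Tb j c \<and> p \<in> b \<and> q \<in> b"
    if pq: "p \<in> Ln j c" "q \<in> Ln j c" "phi p \<noteq> phi q" for p q
  proof (rule ex1I[of _ "blk p q"])
    have pP: "p \<in> P" "q \<in> P" "p \<noteq> q" "h j p = c" "h j q = c" using pq unfolding Ln_def by auto
    have "h j (thd p q) = c" using h_thd[OF pP(1-3)] pP neg2 by simp
    then have "blk p q \<subseteq> Ln j c" using thd[OF pP(1-3)] pq unfolding Ln_def by auto
    moreover have "\<not> isFib (blk p q)" by (rule nonfib_pair[OF blk(2,3)[OF pP(1-3)] pq(3)])
    ultimately show "blk p q \<in> Tb j c \<and> p \<in> blk p q \<and> q \<in> blk p q"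
      using blk[OF pP(1-3)] unfolding Tb_def by auto
  next
    fix b assume "b \<in> Tb j c \<and> p \<in> b \<and> q \<in> b"
    then have "b \<in> B" "p \<in> b" "q \<in> b" "p \<noteq> q" using pq(3) unfolding Tb_def by auto
    then show "b = blk p q" by (rule blk_uniq)
  qed
qed


definition TrL :: "nat \<Rightarrow> 3 \<Rightarrow> 'a set set set" where
  "TrL j c = latin.Tr (Ln j c) (Tb j c)"

definition num :: "nat \<Rightarrow> 3 \<Rightarrow> 'a set set \<Rightarrow> nat" where
  "num j c = (SOME n. bij_betw n (TrL j c) {0, 1, 2})"

definition jof :: "'a set \<Rightarrow> nat" where
  "jof b = (THE j. j < 4 \<and> (\<exists>c. b \<subseteq> Ln j c))"

definition cof :: "'a set \<Rightarrow> 3" where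
  "cof b = (THE c. b \<subseteq> Ln (jof b) c)"

definition part :: "nat \<Rightarrow> 3 \<Rightarrow> 'a set \<Rightarrow> 'a set set" where
  "part j c b = (THE t. t \<in> TrL j c \<and> b \<in> t)"

definition col :: "'a set \<Rightarrow> (nat \<times> nat) option" where
  "col b = (if isFib b then None else
     Some (jof b, num (jof b) (cof b) (part (jof b) (cof b) b)))"

lemma num_bij: assumes "j < 4" shows "bij_betw (num j c) (TrL j c) {0, 1, 2}"
proof -
  have c3: "card (TrL j c) = 3" unfolding TrL_def using latin.card_Tr[OF latin_inst[OF assms]] .
  then have "finite (TrL j c)" by (intro card_ge_0_finite) simp
  then have "\<exists>n. bij_betw n (TrL j c) {0, 1, 2::nat}" using c3 bij_betw_iff_card[of "TrL j c" "{0,1,2::nat}"] by simp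
  then show ?thesis unfolding num_def by (rule someI_ex)
qed

lemma part_spec: assumes "j < 4" "b \<in> Tb j c"
  shows "part j c b \<in> TrL j c" "b \<in> part j c b"
    "\<And>t. t \<in> TrL j c \<Longrightarrow> b \<in> t \<Longrightarrow> t = part j c b"
proof -
  have ex: "\<exists>!t. t \<in> TrL j c \<and> b \<in> t" unfolding TrL_def using latin.Tr_part[OF latin_inst[OF assms(1)] assms(2)] .
  show "part j c b \<in> TrL j c" "b \<in> part j c b" unfolding part_def using theI'[OF ex] by auto
  show "\<And>t. t \<in> TrL j c \<Longrightarrow> b \<in> t \<Longrightarrow> t = part j c b" unfolding part_def using the1_equality[OF ex] by auto
qed

lemma col_spec: assumes b: "b \<in> B" "\<not> isFib b" and j: "j < 4" and sub: "b \<subseteq> Ln j c"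
  shows "jof b = j" "cof b = c" "b \<in> Tb j c"
    "col b = Some (j, num j c (part j c b))"
proof -
  show jb: "jof b = j" unfolding jof_def using the1_equality[OF jof_ex1[OF b]] j sub by auto
  have ne: "b \<noteq> {}" using blk_card[OF b(1)] by auto
  have "\<exists>!c. b \<subseteq> Ln j c"
  proof (rule ex1I[of _ c])
    show "b \<subseteq> Ln j c" by (rule sub)
  next
    fix c' assume "b \<subseteq> Ln j c'"
    then show "c' = c" using sub ne unfolding Ln_def by auto
  qed
  then show cb: "cof b = c" unfolding cof_def jb using sub by (simp add: the1_equality)
  show "b \<in> Tb j c" using b sub unfolding Tb_def by auto
  show "col b = Some (j, num j c (part j c b))" unfolding col_def using b jb cb by simp
qed

lemma nonfib_line: assumes b: "b \<in> B" "\<not> isFib b"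
  obtains j c where "j < 4" "b \<subseteq> Ln j c"
  using jof_ex1[OF b] by blast

lemma class_fib: "parallel_class P B {b\<in>B. col b = None}"
  unfolding parallel_class_def
proof (intro conjI ballI)
  show "{b\<in>B. col b = None} \<subseteq> B" by auto
  fix p assume p: "p \<in> P"
  show "\<exists>!c. c \<in> {b\<in>B. col b = None} \<and> p \<in> c"
  proof (rule ex1I[of _ "Fib (phi p)"])
    have "isFib (Fib (phi p))" unfolding isFib_def by blast
    moreover have "p \<in> Fib (phi p)" using p unfolding Fib_def by auto
    ultimately show "Fib (phi p) \<in> {b\<in>B. col b = None} \<and> p \<in> Fib (phi p)"
      using Fib_B unfolding col_def by auto
  next
    fix c assume c: "c \<in> {b\<in>B. col b = None} \<and> p \<in> c"
    then have "isFib c" unfolding col_def by (auto split: if_splits)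
    then obtain u where "c = Fib u" unfolding isFib_def by blast
    then show "c = Fib (phi p)" using c unfolding Fib_def by auto
  qed
qed

lemma class_some: assumes b0: "b0 \<in> B" "col b0 = Some (j, k)"
  shows "parallel_class P B {b\<in>B. col b = Some (j, k)}"
  unfolding parallel_class_def
proof (intro conjI ballI)
  show "{b\<in>B. col b = Some (j, k)} \<subseteq> B" by auto
  have nf0: "\<not> isFib b0" using b0 unfolding col_def by (auto split: if_splits)
  obtain j0 c0 where jc0: "j0 < 4" "b0 \<subseteq> Ln j0 c0" using nonfib_line[OF b0(1) nf0] by blast
  have jj: "j = j0" and kk: "k = num j0 c0 (part j0 c0 b0)"
    using col_spec[OF b0(1) nf0 jc0] b0(2) by auto
  have j4: "j < 4" using jj jc0 by simp
  have pt0: "part j0 c0 b0 \<in> TrL j0 c0" using part_spec(1)[OF jc0(1) col_spec(3)[OF b0(1) nf0 jc0]] .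
  have "k \<in> {0, 1, 2}"
    using bij_betwE[OF num_bij[OF jc0(1)], rule_format, OF pt0] kk by simp
  fix p assume p: "p \<in> P"
  define c where "c = h j p"
  have pL: "p \<in> Ln j c" using p unfolding c_def Ln_def by auto
  have "k \<in> num j c ` TrL j c" using bij_betw_imp_surj_on[OF num_bij[OF j4, of c]] \<open>k \<in> {0,1,2}\<close> by simp
  then obtain t where t: "t \<in> TrL j c" "num j c t = k" by (rule imageE) simp
  have lat: "latin (Ln j c) phi (Tb j c)" by (rule latin_inst[OF j4])
  have ex1: "\<exists>!b. b \<in> t \<and> p \<in> b" using latin.Tr_par[OF lat t(1)[unfolded TrL_def] pL] .
  have tsub: "t \<subseteq> Tb j c" using latin.Tr_sub[OF lat t(1)[unfolded TrL_def]] .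
  have inC: "b \<in> {b\<in>B. col b = Some (j, k)}" if bt: "b \<in> t" for b
  proof -
    have bT: "b \<in> Tb j c" using bt tsub by auto
    then have bB: "b \<in> B" "\<not> isFib b" "b \<subseteq> Ln j c" unfolding Tb_def by auto
    have "part j c b = t" using part_spec(3)[OF j4 bT t(1) bt] by simp
    then show ?thesis using col_spec(4)[OF bB(1,2) j4 bB(3)] t(2) bB(1) by simp
  qed
  have bk: "b \<in> t" if bC: "b \<in> {b\<in>B. col b = Some (j, k)}" "p \<in> b" for b
  proof -
    have pb: "p \<in> b" using bC(2) .
    have bB: "b \<in> B" "\<not> isFib b" using bC(1) unfolding col_def by (auto split: if_splits)
    obtain j1 c1 where jc1: "j1 < 4" "b \<subseteq> Ln j1 c1" using nonfib_line[OF bB] by blast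
    have "j1 = j" using col_spec(4)[OF bB jc1] bC(1) by simp
    then have "c1 = c" using jc1 pb unfolding c_def Ln_def by auto
    then have sub: "b \<subseteq> Ln j c" using jc1 \<open>j1 = j\<close> by simp
    have bT: "b \<in> Tb j c" using col_spec(3)[OF bB j4 sub] .
    have "num j c (part j c b) = k" using col_spec(4)[OF bB j4 sub] bC(1) by simp
    moreover have "part j c b \<in> TrL j c" using part_spec(1)[OF j4 bT] .
    ultimately have "part j c b = t"
      using inj_onD[OF bij_betw_imp_inj_on[OF num_bij[OF j4, of c]]] t by simp
    then show "b \<in> t" using part_spec(2)[OF j4 bT] by simp
  qed
  show "\<exists>!b. b \<in> {b\<in>B. col b = Some (j, k)} \<and> p \<in> b"
  proof -
    obtain b where b: "b \<in> t" "p \<in> b" using ex1 by blast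
    show ?thesis
    proof (rule ex1I[of _ b])
      show "b \<in> {b\<in>B. col b = Some (j, k)} \<and> p \<in> b" using inC b by auto
    next
      fix b' assume "b' \<in> {b\<in>B. col b = Some (j, k)} \<and> p \<in> b'"
      then have "b' \<in> t" "p \<in> b'" using bk by auto
      then show "b' = b" using ex1 b by blast
    qed
  qed
qed

lemma resolvable: "resolvable P B"
  unfolding resolvable_def
proof (rule exI[of _ "(\<lambda>x. {b\<in>B. col b = x}) ` (col ` B)"], intro conjI ballI)
  let ?Q = "(\<lambda>x. {b\<in>B. col b = x}) ` (col ` B)"
  show "parallel_class P B C" if "C \<in> ?Q" for C
  proof -
    from that obtain x where x: "x \<in> col ` B" "C = {b\<in>B. col b = x}" by blast
    then obtain b0 where b0: "b0 \<in> B" "C = {b\<in>B. col b = col b0}" by blast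
    show ?thesis
    proof (cases "col b0")
      case None then show ?thesis using class_fib b0 by simp
    next
      case (Some x)
      then obtain j k where "col b0 = Some (j, k)" by (cases x) auto
      then show ?thesis using class_some[OF b0(1)] b0 by simp
    qed
  qed
  fix b assume b: "b \<in> B"
  show "\<exists>!C. C \<in> ?Q \<and> b \<in> C"
  proof (rule ex1I[of _ "{b'\<in>B. col b' = col b}"])
    show "{b'\<in>B. col b' = col b} \<in> ?Q \<and> b \<in> {b'\<in>B. col b' = col b}" using b by auto
  next
    fix C assume "C \<in> ?Q \<and> b \<in> C"
    then obtain x where x: "x \<in> col ` B" "C = {b\<in>B. col b = x}" "b \<in> C" by blast
    then have "col b = x" by simp
    then show "C = {b'\<in>B. col b' = col b}" using x(2) by simp
  qed
qed

end




context sts27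
begin

lemma indep3: assumes "F3_indep_rows P S"
  and "\<forall>p\<in>P. (\<Sum>b\<in>{b\<in>S. p \<in> b}. (of_int (c b) :: 3)) = 0"
  shows "\<forall>b\<in>S. (of_int (c b) :: 3) = 0"
proof -
  have "\<forall>p\<in>P. (\<Sum>b\<in>{b\<in>S. p \<in> b}. c b) mod 3 = 0"
    using assms(2) by (simp add: of_int3_0[symmetric])
  then have "\<forall>b\<in>S. c b mod 3 = 0" using assms(1) unfolding F3_indep_rows_def by blast
  then show ?thesis by (simp add: of_int3_0)
qed

lemma double_count:
  fixes x :: "'a \<Rightarrow> 3" and C :: "'a set \<Rightarrow> 3"
  assumes S: "S \<subseteq> B"
  shows "(\<Sum>p\<in>P. x p * (\<Sum>b\<in>{b\<in>S. p \<in> b}. C b)) = (\<Sum>b\<in>S. C b * sum x b)"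
proof -
  have fS: "finite S" using S finB finite_subset by blast
  have "(\<Sum>p\<in>P. x p * (\<Sum>b\<in>{b\<in>S. p \<in> b}. C b)) = (\<Sum>p\<in>P. \<Sum>b\<in>S. if p \<in> b then x p * C b else 0)"
    using fS by (simp add: sum_distrib_left sum.inter_filter if_distrib cong: if_cong)
  also have "\<dots> = (\<Sum>b\<in>S. \<Sum>p\<in>P. if p \<in> b then x p * C b else 0)" by (rule sum.swap)
  also have "\<dots> = (\<Sum>b\<in>S. C b * sum x b)"
  proof (rule sum.cong[OF refl])
    fix b assume "b \<in> S"
    then have bP: "b \<subseteq> P" using S blk_sub by auto
    then have "{p\<in>P. p \<in> b} = b" by auto
    then have "(\<Sum>p\<in>P. if p \<in> b then x p * C b else 0) = (\<Sum>p\<in>b. x p * C b)"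
      using sum.inter_filter[OF finP, of "\<lambda>p. x p * C b" "\<lambda>p. p \<in> b"] by simp
    then show "(\<Sum>p\<in>P. if p \<in> b then x p * C b else 0) = C b * sum x b"
      by (simp add: sum_distrib_left mult.commute)
  qed
  finally show ?thesis .
qed

lemma span_step:
  fixes x :: "'a \<Rightarrow> 3"
  assumes S: "S \<subseteq> B" and ind: "F3_indep_rows P S"
    and mx: "\<And>S'. S' \<subseteq> B \<Longrightarrow> F3_indep_rows P S' \<Longrightarrow> card S' \<le> card S"
    and xS: "\<forall>b\<in>S. sum x b = 0"
  shows "zs x"
  unfolding zs_def
proof
  fix b assume bB: "b \<in> B"
  show "sum x b = 0"
  proof (cases "b \<in> S")
    case True then show ?thesis using xS by auto
  next
    case False
    have fS: "finite S" using S finB finite_subset by blast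
    let ?S' = "insert b S"
    have "\<not> F3_indep_rows P ?S'"
    proof
      assume "F3_indep_rows P ?S'"
      then have "card ?S' \<le> card S" using mx bB S by auto
      then show False using fS False by simp
    qed
    then obtain c :: "'a set \<Rightarrow> int" where c1: "\<forall>p\<in>P. (\<Sum>b\<in>{b'\<in>?S'. p \<in> b'}. c b) mod 3 = 0"
      and c2: "\<exists>b'\<in>?S'. c b' mod 3 \<noteq> 0" unfolding F3_indep_rows_def by blast
    define C where "C b' = (of_int (c b') :: 3)" for b'
    have C1: "\<forall>p\<in>P. (\<Sum>b\<in>{b'\<in>?S'. p \<in> b'}. C b) = 0"
      using c1 unfolding C_def by (simp add: of_int3_0[symmetric])
    have split: "(\<Sum>b\<in>{b'\<in>?S'. p \<in> b'}. C b) = (if p \<in> b then C b else 0) + (\<Sum>b\<in>{b'\<in>S. p \<in> b'}. C b)" for p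
    proof (cases "p \<in> b")
      case True
      then have "{b'\<in>?S'. p \<in> b'} = insert b {b'\<in>S. p \<in> b'}" by auto
      then show ?thesis using True False fS by simp
    next
      case f2: False
      then have "{b'\<in>?S'. p \<in> b'} = {b'\<in>S. p \<in> b'}" by auto
      then show ?thesis using f2 by simp
    qed
    have Cb: "C b \<noteq> 0"
    proof
      assume Cb0: "C b = 0"
      then have "\<forall>p\<in>P. (\<Sum>b\<in>{b'\<in>S. p \<in> b'}. C b) = 0" using C1 split Cb0 by (simp cong: if_cong)
      then have "\<forall>b'\<in>S. C b' = 0" using indep3[OF ind] unfolding C_def by blast
      then have "\<forall>b'\<in>?S'. c b' mod 3 = 0" using Cb0 unfolding C_def by (simp add: of_int3_0)
      then show False using c2 by blast
    qed
    have "(\<Sum>p\<in>P. x p * (\<Sum>b\<in>{b'\<in>?S'. p \<in> b'}. C b)) = 0" using C1 by simp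
    moreover have "(\<Sum>p\<in>P. x p * (\<Sum>b\<in>{b'\<in>?S'. p \<in> b'}. C b)) = (\<Sum>b\<in>?S'. C b * sum x b)"
      by (rule double_count) (use S bB in auto)
    moreover have "(\<Sum>b\<in>?S'. C b * sum x b) = C b * sum x b"
      using fS False xS by simp
    ultimately have "C b * sum x b = 0" by simp
    then show ?thesis using nz_mult3[OF Cb] by blast
  qed
qed


lemma PiE_restr: assumes "x \<in> PiE P (\<lambda>_. UNIV :: 3 set)" "\<forall>p\<in>P. x p = v p"
  shows "x = restrict v P"
proof (rule ext)
  fix p show "x p = restrict v P p"
    using assms by (cases "p \<in> P") (auto simp: PiE_def extensional_def)
qed

lemma exists_fg: assumes rk: "rank3 P B \<le> 24"
  shows "\<exists>f g. zs f \<and> zs g \<and> \<not> (\<exists>a. \<forall>p\<in>P. f p = a) \<and> (\<forall>a k. \<not> (\<forall>p\<in>P. g p = a + k * f p))"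
proof -
  define R where "R = {card S | S. S \<subseteq> B \<and> F3_indep_rows P S}"
  have "R \<subseteq> card ` Pow B" unfolding R_def by auto
  then have finR: "finite R" using finB finite_subset by blast
  have "F3_indep_rows P {}" unfolding F3_indep_rows_def by simp
  then have "0 \<in> R" unfolding R_def by force
  then have "Max R \<in> R" using Max_in[OF finR] by blast
  then obtain S where S: "S \<subseteq> B" "F3_indep_rows P S" "card S = Max R" unfolding R_def by auto
  have mx: "card S' \<le> card S" if "S' \<subseteq> B" "F3_indep_rows P S'" for S'
    using Max_ge[OF finR, of "card S'"] that S(3) unfolding R_def by auto
  have cS: "card S \<le> 24" using rk S(3) unfolding rank3_def R_def by simp
  have fS: "finite S" using S finB finite_subset by blast
  have span: "zs x" if "\<forall>b\<in>S. sum x b = 0" for x :: "'a \<Rightarrow> 3"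
    by (rule span_step[OF S(1,2) mx that])
  define X where "X = PiE P (\<lambda>_. UNIV :: 3 set)"
  define Y where "Y = PiE S (\<lambda>_. UNIV :: 3 set)"
  define Phi where "Phi x = restrict (\<lambda>b. sum x b) S" for x :: "'a \<Rightarrow> 3"
  have finX: "finite X" unfolding X_def using finP by (simp add: finite_PiE)
  have finY: "finite Y" unfolding Y_def using fS by (simp add: finite_PiE)
  have cX: "card X = 3 ^ 27" unfolding X_def using finP c27 by (simp add: card_PiE)
  have cY: "card Y = 3 ^ card S" unfolding Y_def using fS by (simp add: card_PiE)
  have PhiY: "Phi ` X \<subseteq> Y" unfolding Phi_def Y_def by auto
  have "\<exists>y\<in>Y. 27 \<le> card {x\<in>X. Phi x = y}"
  proof (rule ccontr)
    assume "\<not> ?thesis"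
    then have le: "card {x\<in>X. Phi x = y} \<le> 26" if "y \<in> Y" for y using that by force
    have "card X = (\<Sum>y\<in>Y. card {x\<in>X. Phi x = y})"
      unfolding card_eq_sum by (rule sum.group[OF finX finY PhiY, symmetric])
    also have "\<dots> \<le> (\<Sum>y\<in>Y. 26)" by (rule sum_mono) (rule le)
    also have "\<dots> = 26 * 3 ^ card S" using cY by simp
    also have "\<dots> \<le> 26 * 3 ^ 24"
    proof -
      have "(3::nat) ^ card S \<le> 3 ^ 24" by (rule power_increasing[OF cS]) simp
      then show ?thesis by (rule mult_le_mono2)
    qed
    finally show False using cX by simp
  qed
  then obtain y where y: "y \<in> Y" "27 \<le> card {x\<in>X. Phi x = y}" by blast
  define F where "F = {x\<in>X. Phi x = y}"
  have "F \<noteq> {}" using y unfolding F_def by (metis card.empty not_numeral_le_zero)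
  then obtain x0 where x0: "x0 \<in> F" by blast
  define d where "d x = restrict (\<lambda>p. x p - x0 p) P" for x :: "'a \<Rightarrow> 3"
  define N where "N = {z\<in>X. zs z}"
  have finN: "finite N" unfolding N_def using finX by simp
  have dN: "d x \<in> N" if xF: "x \<in> F" for x
  proof -
    have "d x \<in> X" unfolding d_def X_def by auto
    moreover have "\<forall>b\<in>S. sum (d x) b = 0"
    proof
      fix b assume bS: "b \<in> S"
      then have bP: "b \<subseteq> P" using S(1) blk_sub by auto
      have "sum (d x) b = (\<Sum>p\<in>b. x p - x0 p)" unfolding d_def using bP by (intro sum.cong) auto
      also have "\<dots> = sum x b - sum x0 b" by (simp add: sum_subtractf)
      also have "sum x b = sum x0 b"
      proof -
        have "Phi x b = Phi x0 b" using xF x0 unfolding F_def by simp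
        then show ?thesis using bS unfolding Phi_def by simp
      qed
      finally show "sum (d x) b = 0" by simp
    qed
    ultimately show ?thesis unfolding N_def using span by blast
  qed
  have "inj_on d F"
  proof (rule inj_onI)
    fix x x' assume xx: "x \<in> F" "x' \<in> F" "d x = d x'"
    have "\<forall>p\<in>P. x p = x' p"
    proof
      fix p assume "p \<in> P"
      then have "x p - x0 p = x' p - x0 p" using fun_cong[OF xx(3), of p] unfolding d_def by simp
      then show "x p = x' p" by simp
    qed
    moreover have "x \<in> X" "x' \<in> X" using xx unfolding F_def by auto
    ultimately show "x = x'" using PiE_restr[of x x'] PiE_restr[of x' x'] unfolding X_def by auto
  qed
  then have "card (d ` F) = card F" by (rule card_image)
  moreover have "d ` F \<subseteq> N" using dN by auto
  ultimately have "card F \<le> card N" using card_mono[OF finN, of "d ` F"] by simp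
  then have cN: "27 \<le> card N" using y unfolding F_def by linarith
  define K where "K = (\<lambda>a. restrict (\<lambda>_. a) P) ` (UNIV :: 3 set)"
  have "card K \<le> 3" unfolding K_def using card_image_le[of "UNIV :: 3 set"] by simp
  moreover have "finite K" unfolding K_def by simp
  ultimately have "\<not> N \<subseteq> K" using cN card_mono[of K N] by linarith
  then obtain f where f: "f \<in> N" "f \<notin> K" by blast
  have nf: "\<not> (\<exists>a. \<forall>p\<in>P. f p = a)"
  proof
    assume "\<exists>a. \<forall>p\<in>P. f p = a"
    then obtain a where "\<forall>p\<in>P. f p = a" by blast
    then have "f = restrict (\<lambda>_. a) P" using PiE_restr[of f "\<lambda>_. a"] f(1) unfolding N_def X_def by auto
    then show False using f(2) unfolding K_def by auto
  qed
  define Sp where "Sp = (\<lambda>(a, k). restrict (\<lambda>p. a + k * f p) P) ` (UNIV :: (3 \<times> 3) set)"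
  have "card Sp \<le> card (UNIV :: (3 \<times> 3) set)" unfolding Sp_def by (rule card_image_le) simp
  then have "card Sp \<le> 9" by simp
  moreover have "finite Sp" unfolding Sp_def by simp
  ultimately have "\<not> N \<subseteq> Sp" using cN card_mono[of Sp N] by linarith
  then obtain g where g: "g \<in> N" "g \<notin> Sp" by blast
  have ng: "\<not> (\<forall>p\<in>P. g p = a + k * f p)" for a k
  proof
    assume "\<forall>p\<in>P. g p = a + k * f p"
    then have "g = restrict (\<lambda>p. a + k * f p) P" using PiE_restr[of g] g(1) unfolding N_def X_def by auto
    then show False using g(2) unfolding Sp_def by auto
  qed
  show ?thesis using f(1) g(1) nf ng unfolding N_def by blast
qed

end

theorem proposition3p3:
  fixes P :: "'a set" and B :: "'a set set"
  assumes "STS P B" and "card P = 27" and "rank3 P B \<le> 24"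
  shows "resolvable P B"
proof -
  interpret sts27 P B using assms(1,2) by unfold_locales
  obtain f g where fg: "zs f" "zs g" "\<not> (\<exists>a. \<forall>p\<in>P. f p = a)" "\<forall>a k. \<not> (\<forall>p\<in>P. g p = a + k * f p)"
    using exists_fg[OF assms(3)] by blast
  interpret res27 P B f g using fg by unfold_locales auto
  show ?thesis by (rule resolvable)
qed


end
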